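(* Let $\mathcal M$ be the class of multilayer networks with $d$ aspects having a common vertex set $L_0$ and common elementary-layer sets $L_1,\dots,L_d$, and let $p\subseteq\{0,\dots,d\}$ be nonempty. Then for all $M,M'\in\mathcal M$: (1) $M\cong_p M'$ if and only if $f_p(M)\cong f_p(M')$; (2) if $C_G$ is a complete invariant for isomorphism of vertex-colored graphs (i.e. $C_G(G)=C_G(G')\iff G\cong G'$), then $M\mapsto C_G(f_p(M))$ is a complete invariant for $\cong_p$ on $\mathcal M$; (3) $\mathrm{Aut}_p(M)=\{\boldsymbol\zeta\in P_p: g_p^M(\boldsymbol\zeta)\in\mathrm{Aut}(f_p(M))\}$.
   Context: A multilayer network with $d$ aspects is $M=(V_M,E_M,V,\mathbf L)$ with $\mathbf L=(L_1,\dots,L_d)$, $V_M\subseteq V\times L_1\times\dots\times L_d$, $E_M\subseteq V_M\times V_M$; write $L_0=V$ and $\mathbf v=(v_0,\dots,v_d)$. It is assumed that $L_0,\dots,L_d$ are pairwise disjoint and that no tuple in $L_0\times\dots\times L_d$ belongs to any $L_a$. For nonempty $p\subseteq\{0,\dots,d\}$, $P_p=D_0\times\dots\times D_d$ with $D_a=S_{L_a}$ if $a\in p$ and $D_a=\{1_{L_a}\}$ otherwise. For $\boldsymbol\zeta\in P_p$, $\mathbf v^{\boldsymbol\zeta}=(\zeta_0(v_0),\dots,\zeta_d(v_d))$ and $M^{\boldsymbol\zeta}=(\{\mathbf v^{\boldsymbol\zeta}:\mathbf v\in V_M\},\{(\mathbf v^{\boldsymbol\zeta},\mathbf u^{\boldsymbol\zeta}):(\mathbf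 v,\mathbf u)\in E_M\},V,\mathbf L)$. $M\cong_pM'$ means there is $\boldsymbol\zeta\in P_p$ with $M^{\boldsymbol\zeta}=M'$; $\mathrm{Aut}_p(M)=\{\boldsymbol\zeta\in P_p:M^{\boldsymbol\zeta}=M\}$. A vertex-colored graph is $G=(V_c,E_c,\pi,C)$ with $E_c\subseteq V_c\times V_c$, $\pi:V_c\to C$. For a bijection $\gamma:V_c\to V_c'$, $G^\gamma=(\gamma(V_c),\{(\gamma(v),\gamma(u)):(v,u)\in E_c\},\pi\circ\gamma^{-1},C)$; $G\cong G'$ means $G^\gamma=G'$ for some such $\gamma$, and $\mathrm{Aut}(G)$ is the set of bijections $\gamma$ of the vertex set of $G$ with $G^\gamma=G$. Let $\overline p=\{0,\dots,d\}\setminus p=\{\overline p_1<\dots<\overline p_m\}$. Define $f_p(M)=(V_G,E_G,\pi,C)$ by: $V_G=V_M\cup\bigcup_{a\in p}L_a$; $E_G=E_M\cup\{(v_a,\mathbf v):\mathbf v\in V_M,\ a\in p\}$; $C=p\cup(L_{\overline p_1}\times\dots\times L_{\overline p_m})$; $\pi(x)=a$ if $x\in L_a$ with $a\in p$, and $\pi(\mathbf v)=(v_{\overline p_1},\dots,v_{\overline p_m})$ for $\mathbf v\in V_M$. For $\boldsymbol\zeta\in P_p$, $g_p^M(\boldsymbol\zeta)$ is the bijection from $V_G$ to the vertex set of $f_p(M^{\boldsymbol\zeta})$ given by $\mathbf v\mapsto\mathbf v^{\boldsymbol\zeta}$ for $\mathbf v\in V_M$ and $x\mapsto\zeta_a(x)$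 for $x\in L_a$, $a\in p$. *)

theory Defs
  imports "HOL-Combinatorics.Permutations"
begin

(* Elements of the vertex set L_0 and of the elementary-layer sets L_1..L_d have type 'a;
   the layer sets are given by L :: nat => 'a set (L 0 = V). *)

definition tuples :: "nat \<Rightarrow> (nat \<Rightarrow> 'a set) \<Rightarrow> 'a list set" where
  "tuples d L = {v. length v = Suc d \<and> (\<forall>i\<le>d. v ! i \<in> L i)}"

definition mlnet :: "nat \<Rightarrow> (nat \<Rightarrow> 'a set) \<Rightarrow> 'a list set \<times> ('a list \<times> 'a list) set \<Rightarrow> bool" where
  "mlnet d L M \<longleftrightarrow> fst M \<subseteq> tuples d L \<and> snd M \<subseteq> fst M \<times> fst M"

definition Pp :: "nat \<Rightarrow> (nat \<Rightarrow> 'a set) \<Rightarrow> nat set \<Rightarrow> (nat \<Rightarrow> 'a \<Rightarrow> 'a) set" where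
  "Pp d L p = {\<zeta>. \<forall>a. (a \<le> d \<and> a \<in> p \<longrightarrow> \<zeta> a permutes L a) \<and> (\<not> (a \<le> d \<and> a \<in> p) \<longrightarrow> \<zeta> a = id)}"

definition tup_act :: "(nat \<Rightarrow> 'a \<Rightarrow> 'a) \<Rightarrow> 'a list \<Rightarrow> 'a list" where
  "tup_act \<zeta> v = map (\<lambda>i. \<zeta> i (v ! i)) [0..<length v]"

definition ml_act :: "(nat \<Rightarrow> 'a \<Rightarrow> 'a) \<Rightarrow> 'a list set \<times> ('a list \<times> 'a list) set
    \<Rightarrow> 'a list set \<times> ('a list \<times> 'a list) set" where
  "ml_act \<zeta> M = (tup_act \<zeta> ` fst M, (\<lambda>(v, u). (tup_act \<zeta> v, tup_act \<zeta> u)) ` snd M)"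

definition ml_iso_p :: "nat \<Rightarrow> (nat \<Rightarrow> 'a set) \<Rightarrow> nat set \<Rightarrow> 'a list set \<times> ('a list \<times> 'a list) set
    \<Rightarrow> 'a list set \<times> ('a list \<times> 'a list) set \<Rightarrow> bool" where
  "ml_iso_p d L p M M' \<longleftrightarrow> (\<exists>\<zeta>\<in>Pp d L p. ml_act \<zeta> M = M')"

definition Aut_p :: "nat \<Rightarrow> (nat \<Rightarrow> 'a set) \<Rightarrow> nat set \<Rightarrow> 'a list set \<times> ('a list \<times> 'a list) set
    \<Rightarrow> (nat \<Rightarrow> 'a \<Rightarrow> 'a) set" where
  "Aut_p d L p M = {\<zeta>\<in>Pp d L p. ml_act \<zeta> M = M}"

type_synonym ('v, 'c) cgraph = "'v set \<times> ('v \<times> 'v) set \<times> ('v \<Rightarrow> 'c) \<times> 'c set"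

definition cg_wf :: "('v, 'c) cgraph \<Rightarrow> bool" where
  "cg_wf G = (case G of (V, E, \<pi>, C) \<Rightarrow>
     E \<subseteq> V \<times> V \<and> \<pi> ` V \<subseteq> C \<and> (\<forall>x. x \<notin> V \<longrightarrow> \<pi> x = undefined))"

definition cg_act :: "('v \<Rightarrow> 'v) \<Rightarrow> ('v, 'c) cgraph \<Rightarrow> ('v, 'c) cgraph" where
  "cg_act \<gamma> G = (case G of (V, E, \<pi>, C) \<Rightarrow>
     (\<gamma> ` V, (\<lambda>(v, u). (\<gamma> v, \<gamma> u)) ` E, (\<lambda>y\<in>\<gamma> ` V. \<pi> (inv_into V \<gamma> y)), C))"

definition cg_iso :: "('v, 'c) cgraph \<Rightarrow> ('v, 'c) cgraph \<Rightarrow> bool" where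
  "cg_iso G G' \<longleftrightarrow> (\<exists>\<gamma>. bij_betw \<gamma> (fst G) (fst G') \<and> cg_act \<gamma> G = G')"

definition cg_Aut :: "('v, 'c) cgraph \<Rightarrow> ('v \<Rightarrow> 'v) set" where
  "cg_Aut G = {\<gamma>. bij_betw \<gamma> (fst G) (fst G) \<and> cg_act \<gamma> G = G}"

definition pbar :: "nat \<Rightarrow> nat set \<Rightarrow> nat list" where
  "pbar d p = filter (\<lambda>i. i \<notin> p) [0..<Suc d]"

(* graph vertices: Inl v for node-layer tuples, Inr x for elementary layers / vertices;
   colors: Inl a for a in p, Inr (v_pbar1,...,v_pbarm) *)
definition f_p :: "nat \<Rightarrow> (nat \<Rightarrow> 'a set) \<Rightarrow> nat set \<Rightarrow> 'a list set \<times> ('a list \<times> 'a list) set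
    \<Rightarrow> ('a list + 'a, nat + 'a list) cgraph" where
  "f_p d L p M =
    (let VG = Inl ` fst M \<union> Inr ` (\<Union>a\<in>p. L a)
     in (VG,
         (\<lambda>(v, u). (Inl v, Inl u)) ` snd M \<union> {(Inr (v ! a), Inl v) | v a. v \<in> fst M \<and> a \<in> p},
         (\<lambda>x\<in>VG. case x of
             Inl v \<Rightarrow> Inr (map (\<lambda>i. v ! i) (pbar d p))
           | Inr y \<Rightarrow> Inl (THE a. a \<in> p \<and> y \<in> L a)),
         Inl ` p \<union> Inr ` {w. length w = length (pbar d p) \<and>
                            (\<forall>j<length (pbar d p). w ! j \<in> L (pbar d p ! j))}))"

definition g_p :: "nat \<Rightarrow> (nat \<Rightarrow> 'a set) \<Rightarrow> nat set \<Rightarrow> (nat \<Rightarrow> 'a \<Rightarrow> 'a) \<Rightarrow> ('a list + 'a \<Rightarrow> 'a list + 'a)" where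
  "g_p d L p \<zeta> x = (case x of
      Inl v \<Rightarrow> Inl (tup_act \<zeta> v)
    | Inr y \<Rightarrow> Inr (if \<exists>a\<in>p. y \<in> L a then \<zeta> (THE a. a \<in> p \<and> y \<in> L a) y else y))"

end

theory Submission
  imports Defs
begin

lemma tup_act_length[simp]: "length (tup_act z v) = length v"
  by (simp add: tup_act_def)
lemma tup_act_nth[simp]: "i < length v \<Longrightarrow> tup_act z v ! i = z i (v ! i)"
  by (simp add: tup_act_def)

lemma fst_f_p: "fst (f_p d L p M) = Inl ` fst M \<union> Inr ` (\<Union>a\<in>p. L a)"
  by (simp add: f_p_def Let_def)
lemma edges_f_p: "fst (snd (f_p d L p M)) = (\<lambda>(v, u). (Inl v, Inl u)) ` snd M \<union> {(Inr (v ! a), Inl v) | v a. v \<in> fst M \<and> a \<in> p}"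
  by (simp add: f_p_def Let_def)
lemma col_f_p: "fst (snd (snd (f_p d L p M))) = (\<lambda>x\<in>fst (f_p d L p M). case x of Inl v \<Rightarrow> Inr (map (\<lambda>i. v ! i) (pbar d p)) | Inr y \<Rightarrow> Inl (THE a. a \<in> p \<and> y \<in> L a))"
  by (simp add: f_p_def Let_def)
lemma C_f_p: "snd (snd (snd (f_p d L p M))) = Inl ` p \<union> Inr ` {w. length w = length (pbar d p) \<and> (\<forall>j<length (pbar d p). w ! j \<in> L (pbar d p ! j))}"
  by (simp add: f_p_def Let_def)

lemma E2_eq: "{(Inr (v ! a), Inl v) | v a. v \<in> A \<and> a \<in> p} = (\<lambda>(v,a). (Inr (v ! a), Inl v)) ` (A \<times> p)"
  by auto

lemma set_pbar: "set (pbar d p) = {i. i \<le> d \<and> i \<notin> p}"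
  unfolding pbar_def set_filter set_upt by auto

lemma f_p_inj: assumes "f_p d L p M = f_p d L p M'" shows "M = M'"
proof -
  have "fst M = {v. Inl v \<in> fst (f_p d L p M)}" by (auto simp: fst_f_p)
  moreover have "fst M' = {v. Inl v \<in> fst (f_p d L p M')}" by (auto simp: fst_f_p)
  moreover have "snd M = {(v,u). (Inl v, Inl u) \<in> fst (snd (f_p d L p M))}" by (auto simp: edges_f_p)
  moreover have "snd M' = {(v,u). (Inl v, Inl u) \<in> fst (snd (f_p d L p M'))}" by (auto simp: edges_f_p)
  ultimately show ?thesis using assms by (simp add: prod_eq_iff)
qed

lemma cg_act_parts: "cg_act g G = (g ` fst G, (\<lambda>(v, u). (g v, g u)) ` fst (snd G),
   (\<lambda>y\<in>g ` fst G. fst (snd (snd G)) (inv_into (fst G) g y)), snd (snd (snd G)))"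
  by (cases G) (simp add: cg_act_def)

lemma cg_wf_parts: "cg_wf G = (fst (snd G) \<subseteq> fst G \<times> fst G \<and> fst (snd (snd G)) ` fst G \<subseteq> snd (snd (snd G))
   \<and> (\<forall>x. x \<notin> fst G \<longrightarrow> fst (snd (snd G)) x = undefined))"
  by (cases G) (simp add: cg_wf_def)

lemma cg_act_cong: assumes "fst (snd G) \<subseteq> fst G \<times> fst G" "\<And>x. x \<in> fst G \<Longrightarrow> g x = h x"
  shows "cg_act g G = cg_act h G"
proof -
  have 1: "g ` fst G = h ` fst G" using assms(2) by (rule image_cong[OF refl])
  have 2: "(\<lambda>(v, u). (g v, g u)) ` fst (snd G) = (\<lambda>(v, u). (h v, h u)) ` fst (snd G)"
    using assms by (intro image_cong) auto
  have 3: "inv_into (fst G) g y = inv_into (fst G) h y" for y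
  proof -
    have "(\<lambda>x. x \<in> fst G \<and> g x = y) = (\<lambda>x. x \<in> fst G \<and> h x = y)" using assms(2) by auto
    then show ?thesis by (simp add: inv_into_def)
  qed
  show ?thesis unfolding cg_act_parts 1 2 3 ..
qed

lemma Pp_perm: "z \<in> Pp d L p \<Longrightarrow> a \<in> p \<Longrightarrow> p \<subseteq> {..d} \<Longrightarrow> z a permutes L a"
  by (auto simp: Pp_def)
lemma Pp_id: "z \<in> Pp d L p \<Longrightarrow> a \<notin> p \<Longrightarrow> z a = id"
  by (auto simp: Pp_def)

context
  fixes d :: nat and L :: "nat \<Rightarrow> 'a set" and p :: "nat set"
  assumes disj: "\<And>a b. a \<le> d \<Longrightarrow> b \<le> d \<Longrightarrow> a \<noteq> b \<Longrightarrow> L a \<inter> L b = {}"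
    and p_sub: "p \<subseteq> {..d}"
begin

lemma layer_unique: "a \<in> p \<Longrightarrow> b \<in> p \<Longrightarrow> y \<in> L a \<Longrightarrow> y \<in> L b \<Longrightarrow> a = b"
  using disj[of a b] p_sub by auto

lemma the_layer: assumes "a \<in> p" "y \<in> L a" shows "(THE b. b \<in> p \<and> y \<in> L b) = a"
proof (rule the_equality)
  show "a \<in> p \<and> y \<in> L a" using assms by simp
  fix b assume "b \<in> p \<and> y \<in> L b"
  then show "b = a" using assms layer_unique by blast
qed

lemma g_p_Inr: assumes "a \<in> p" "y \<in> L a" shows "g_p d L p z (Inr y) = Inr (z a y)"
  using assms by (auto simp: g_p_def the_layer)

lemma g_p_Inl: "g_p d L p z (Inl v) = Inl (tup_act z v)" by (simp add: g_p_def)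

lemma wf_f_p: assumes M: "mlnet d L M" shows "cg_wf (f_p d L p M)"
proof -
  have V: "fst M \<subseteq> tuples d L" and E: "snd M \<subseteq> fst M \<times> fst M" using M by (auto simp: mlnet_def)
  have "fst (snd (f_p d L p M)) \<subseteq> fst (f_p d L p M) \<times> fst (f_p d L p M)"
  proof
    fix e assume "e \<in> fst (snd (f_p d L p M))"
    then have "e \<in> (\<lambda>(v, u). (Inl v, Inl u)) ` snd M \<union> {(Inr (v ! a), Inl v) | v a. v \<in> fst M \<and> a \<in> p}"
      unfolding edges_f_p .
    then show "e \<in> fst (f_p d L p M) \<times> fst (f_p d L p M)"
    proof
      assume "e \<in> (\<lambda>(v, u). (Inl v, Inl u)) ` snd M" then show ?thesis using E by (auto simp: fst_f_p)
    next
      assume "e \<in> {(Inr (v ! a), Inl v) | v a. v \<in> fst M \<and> a \<in> p}"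
      then obtain v a where e: "e = (Inr (v ! a), Inl v)" "v \<in> fst M" "a \<in> p" by auto
      then have "v ! a \<in> L a" using V p_sub by (auto simp: tuples_def)
      then show ?thesis using e by (auto simp: fst_f_p)
    qed
  qed
  moreover have "fst (snd (snd (f_p d L p M))) ` fst (f_p d L p M) \<subseteq> snd (snd (snd (f_p d L p M)))"
  proof
    fix c assume "c \<in> fst (snd (snd (f_p d L p M))) ` fst (f_p d L p M)"
    then obtain x where x: "x \<in> fst (f_p d L p M)" "c = fst (snd (snd (f_p d L p M))) x" by auto
    show "c \<in> snd (snd (snd (f_p d L p M)))"
    proof (cases x)
      case (Inl v)
      then have v: "v \<in> tuples d L" using x V by (auto simp: fst_f_p)
      have "\<forall>j<length (pbar d p). v ! (pbar d p ! j) \<in> L (pbar d p ! j)"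
      proof (intro allI impI)
        fix j assume "j < length (pbar d p)"
        then have "pbar d p ! j \<in> set (pbar d p)" by simp
        then have "pbar d p ! j \<le> d" by (simp add: set_pbar)
        then show "v ! (pbar d p ! j) \<in> L (pbar d p ! j)" using v by (simp add: tuples_def)
      qed
      then show ?thesis using x Inl by (simp add: col_f_p C_f_p)
    next
      case (Inr y)
      then obtain a where "a \<in> p" "y \<in> L a" using x by (auto simp: fst_f_p)
      then show ?thesis using x Inr by (simp add: col_f_p C_f_p the_layer)
    qed
  qed
  moreover have "\<forall>x. x \<notin> fst (f_p d L p M) \<longrightarrow> fst (snd (snd (f_p d L p M))) x = undefined"
    by (simp add: col_f_p)
  ultimately show ?thesis by (simp add: cg_wf_parts)
qed

lemma fwd: assumes M: "mlnet d L M" and z: "z \<in> Pp d L p"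
  shows "bij_betw (g_p d L p z) (fst (f_p d L p M)) (fst (f_p d L p (ml_act z M)))"
    and "cg_act (g_p d L p z) (f_p d L p M) = f_p d L p (ml_act z M)"
proof -
  define g where "g = g_p d L p z"
  define t where "t = tup_act z"
  define U where "U = (\<Union>a\<in>p. L a)"
  have V: "fst M \<subseteq> tuples d L" using M by (auto simp: mlnet_def)
  have perm: "a \<in> p \<Longrightarrow> z a permutes L a" for a using Pp_perm[OF z _ p_sub] by blast
  have injz: "inj (z i)" for i
    using perm[of i] Pp_id[OF z, of i] by (cases "i \<in> p") (auto dest: permutes_inj)
  have inj_t: "inj t"
  proof (rule injI)
    fix v w assume "t v = t w"
    then have l: "length v = length w" and n: "\<And>i. i < length v \<Longrightarrow> z i (v ! i) = z i (w ! i)"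
      unfolding t_def by (metis tup_act_length, metis tup_act_nth tup_act_length)
    show "v = w" using l n injz by (metis injD nth_equalityI)
  qed
  have gInr: "\<And>a y. a \<in> p \<Longrightarrow> y \<in> L a \<Longrightarrow> g (Inr y) = Inr (z a y)" unfolding g_def by (rule g_p_Inr)
  have gInl: "\<And>v. g (Inl v) = Inl (t v)" unfolding g_def t_def by (rule g_p_Inl)
  have fstact: "fst (ml_act z M) = t ` fst M" by (simp add: ml_act_def t_def)
  have sndact: "snd (ml_act z M) = (\<lambda>(v, u). (t v, t u)) ` snd M" by (simp add: ml_act_def t_def)
  have imgInr: "g ` Inr ` U = Inr ` U"
  proof -
    have "g ` Inr ` L a = Inr ` L a" if a: "a \<in> p" for a
    proof -
      have "g ` Inr ` L a = Inr ` z a ` L a" unfolding image_image using gInr[OF a] by (rule image_cong[OF refl])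
      also have "\<dots> = Inr ` L a" using permutes_image[OF perm[OF a]] by simp
      finally show ?thesis .
    qed
    then show ?thesis unfolding U_def image_UN by simp
  qed
  have img: "g ` fst (f_p d L p M) = fst (f_p d L p (ml_act z M))"
    unfolding fst_f_p fstact image_Un imgInr[unfolded U_def] by (simp add: image_image gInl)
  have inj_g: "inj_on g (fst (f_p d L p M))"
  proof (rule inj_onI)
    fix x y assume x: "x \<in> fst (f_p d L p M)" and y: "y \<in> fst (f_p d L p M)" and e: "g x = g y"
    show "x = y"
    proof (cases x)
      case (Inl v)
      then show ?thesis
      proof (cases y)
        case (Inl w) then show ?thesis using e \<open>x = Inl v\<close> gInl inj_t by (auto dest: injD)
      next
        case (Inr w)
        then obtain b where "b \<in> p" "w \<in> L b" using y by (auto simp: fst_f_p)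
        then show ?thesis using e Inr \<open>x = Inl v\<close> gInl gInr by auto
      qed
    next
      case (Inr v)
      then obtain a where a: "a \<in> p" "v \<in> L a" using x by (auto simp: fst_f_p)
      show ?thesis
      proof (cases y)
        case (Inl w) then show ?thesis using e \<open>x = Inr v\<close> gInl gInr a by auto
      next
        case (Inr w)
        then obtain b where b: "b \<in> p" "w \<in> L b" using y by (auto simp: fst_f_p)
        have "z a v = z b w" using e Inr \<open>x = Inr v\<close> gInr a b by auto
        moreover have "z a v \<in> L a" "z b w \<in> L b" using a b perm by (auto simp: permutes_in_image)
        ultimately have "a = b" using layer_unique a b by metis
        then show ?thesis using \<open>z a v = z b w\<close> injz Inr \<open>x = Inr v\<close> by (auto dest: injD)
      qed
    qed
  qed
  show bij: "bij_betw (g_p d L p z) (fst (f_p d L p M)) (fst (f_p d L p (ml_act z M)))"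
    using inj_g img unfolding g_def bij_betw_def by simp
  have key: "(g (Inr (v ! a)), g (Inl v)) = (Inr (t v ! a), Inl (t v))" if v: "v \<in> fst M" and a: "a \<in> p" for v a
  proof -
    have "v \<in> tuples d L" using v V by auto
    then have "length v = Suc d" "v ! a \<in> L a" using a p_sub by (auto simp: tuples_def)
    moreover have "a < Suc d" using a p_sub by auto
    ultimately show ?thesis using gInr[OF a] gInl by (simp add: t_def)
  qed
  have key1: "g (Inr (v ! a)) = Inr (t v ! a)" and key2: "g (Inl v) = Inl (t v)"
    if "v \<in> fst M" "a \<in> p" for v a using key[OF that] by auto
  have edges: "(\<lambda>(x, y). (g x, g y)) ` fst (snd (f_p d L p M)) = fst (snd (f_p d L p (ml_act z M)))"
  proof -
    have e1: "(\<lambda>(x, y). (g x, g y)) ` ((\<lambda>(v, u). (Inl v, Inl u)) ` snd M)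
       = (\<lambda>(v, u). (Inl v, Inl u)) ` ((\<lambda>(v, u). (t v, t u)) ` snd M)"
      unfolding image_image by (rule image_cong[OF refl]) (auto simp: gInl split: prod.splits)
    have e2: "(\<lambda>(x, y). (g x, g y)) ` ((\<lambda>(v,a). (Inr (v ! a), Inl v)) ` (fst M \<times> p))
       = (\<lambda>(v,a). (Inr (v ! a), Inl v)) ` (t ` fst M \<times> p)"
    proof -
      have r: "t ` fst M \<times> p = (\<lambda>(v,a). (t v, a)) ` (fst M \<times> p)" by force
      have "(\<lambda>(x, y). (g x, g y)) ` ((\<lambda>(v,a). (Inr (v ! a), Inl v)) ` (fst M \<times> p))
          = (\<lambda>(v,a). (Inr (t v ! a), Inl (t v))) ` (fst M \<times> p)"
        unfolding image_image by (rule image_cong[OF refl]) (auto simp: key1 key2)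
      also have "\<dots> = (\<lambda>(v,a). (Inr (v ! a), Inl v)) ` (t ` fst M \<times> p)"
        unfolding r image_image by (rule image_cong[OF refl]) auto
      finally show ?thesis .
    qed
    show ?thesis unfolding edges_f_p E2_eq image_Un e1 e2 fstact sndact ..
  qed
  have cols: "(\<lambda>y\<in>g ` fst (f_p d L p M). fst (snd (snd (f_p d L p M))) (inv_into (fst (f_p d L p M)) g y))
     = fst (snd (snd (f_p d L p (ml_act z M))))"
  proof -
    have "fst (snd (snd (f_p d L p M))) x = fst (snd (snd (f_p d L p (ml_act z M)))) (g x)"
      if x: "x \<in> fst (f_p d L p M)" for x
    proof (cases x)
      case (Inl v)
      then have v: "v \<in> tuples d L" using x V by (auto simp: fst_f_p)
      have gx: "g x \<in> fst (f_p d L p (ml_act z M))" using x img by auto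
      have "map (\<lambda>i. t v ! i) (pbar d p) = map (\<lambda>i. v ! i) (pbar d p)"
      proof (rule map_cong[OF refl])
        fix i assume "i \<in> set (pbar d p)"
        then have "i \<le> d" "i \<notin> p" by (auto simp: set_pbar)
        then show "t v ! i = v ! i" using v Pp_id[OF z] by (simp add: tuples_def t_def)
      qed
      then show ?thesis using x gx Inl gInl by (simp add: col_f_p)
    next
      case (Inr y)
      then obtain a where a: "a \<in> p" "y \<in> L a" using x by (auto simp: fst_f_p)
      have gx: "g x \<in> fst (f_p d L p (ml_act z M))" using x img by auto
      have "z a y \<in> L a" using a perm by (auto simp: permutes_in_image)
      then show ?thesis using x gx Inr gInr a by (simp add: col_f_p the_layer)
    qed
    note h = this
    show ?thesis
    proof (rule ext)
      fix y show "(\<lambda>y\<in>g ` fst (f_p d L p M). fst (snd (snd (f_p d L p M))) (inv_into (fst (f_p d L p M)) g y)) y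
         = fst (snd (snd (f_p d L p (ml_act z M)))) y"
      proof (cases "y \<in> g ` fst (f_p d L p M)")
        case True
        then obtain x where x: "x \<in> fst (f_p d L p M)" "y = g x" by auto
        then show ?thesis using h[OF x(1)] True by (simp add: inv_into_f_f[OF inj_g])
      next
        case False
        then show ?thesis unfolding img by (simp add: col_f_p)
      qed
    qed
  qed
  show "cg_act (g_p d L p z) (f_p d L p M) = f_p d L p (ml_act z M)"
    unfolding cg_act_parts g_def[symmetric] unfolding cols edges unfolding img
    by (simp add: prod_eq_iff C_f_p)
qed


lemma bwd: assumes M: "mlnet d L M" and M': "mlnet d L M'" and iso: "cg_iso (f_p d L p M) (f_p d L p M')"
  shows "ml_iso_p d L p M M'"
proof -
  define G where "G = f_p d L p M"
  define G' where "G' = f_p d L p M'"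
  define VG where "VG = fst G"
  define VG' where "VG' = fst G'"
  have V: "fst M \<subseteq> tuples d L" using M by (auto simp: mlnet_def)
  have V': "fst M' \<subseteq> tuples d L" using M' by (auto simp: mlnet_def)
  obtain \<gamma> where bij: "bij_betw \<gamma> VG VG'" and act: "cg_act \<gamma> G = G'"
    using iso unfolding cg_iso_def G_def G'_def VG_def VG'_def by blast
  have inj: "inj_on \<gamma> VG" and img: "\<gamma> ` VG = VG'" using bij by (auto simp: bij_betw_def)
  have edges: "(\<lambda>(x, y). (\<gamma> x, \<gamma> y)) ` fst (snd G) = fst (snd G')"
    using act unfolding cg_act_parts by (simp add: prod_eq_iff)
  have cols0: "(\<lambda>y\<in>VG'. fst (snd (snd G)) (inv_into VG \<gamma> y)) = fst (snd (snd G'))"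
  proof -
    have img0: "\<gamma> ` fst G = fst G'" using img VG_def VG'_def by simp
    show ?thesis using act img0 unfolding cg_act_parts VG_def VG'_def by (simp add: prod_eq_iff)
  qed
  define col where "col = (\<lambda>x::'a list + 'a. case x of Inl v \<Rightarrow> (Inr (map (\<lambda>i. v ! i) (pbar d p)) :: nat + 'a list)
      | Inr y \<Rightarrow> Inl (THE a. a \<in> p \<and> y \<in> L a))"
  have colG: "x \<in> VG \<Longrightarrow> fst (snd (snd G)) x = col x" for x
    unfolding G_def VG_def col_def by (simp add: col_f_p)
  have colG': "x \<in> VG' \<Longrightarrow> fst (snd (snd G')) x = col x" for x
    unfolding G'_def VG'_def col_def by (simp add: col_f_p)
  have colg: "col (\<gamma> x) = col x" if x: "x \<in> VG" for x
  proof -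
    have gx: "\<gamma> x \<in> VG'" using x img by auto
    then have "col (\<gamma> x) = fst (snd (snd G')) (\<gamma> x)" using colG' by simp
    also have "\<dots> = fst (snd (snd G)) x" unfolding cols0[symmetric] using x gx by (simp add: inv_into_f_f[OF inj])
    also have "\<dots> = col x" using colG x by simp
    finally show ?thesis .
  qed
  have VGI: "x \<in> VG \<longleftrightarrow> (\<exists>v. x = Inl v \<and> v \<in> fst M) \<or> (\<exists>y a. x = Inr y \<and> a \<in> p \<and> y \<in> L a)" for x
    unfolding VG_def G_def fst_f_p by auto
  have VGI': "x \<in> VG' \<longleftrightarrow> (\<exists>v. x = Inl v \<and> v \<in> fst M') \<or> (\<exists>y a. x = Inr y \<and> a \<in> p \<and> y \<in> L a)" for x
    unfolding VG'_def G'_def fst_f_p by auto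
  have step1: "\<exists>z. \<gamma> (Inr y) = Inr z \<and> z \<in> L a" if a: "a \<in> p" "y \<in> L a" for a y
  proof -
    have x: "Inr y \<in> VG" using a VGI by blast
    then have gx: "\<gamma> (Inr y) \<in> VG'" using img by auto
    have c: "col (\<gamma> (Inr y)) = Inl a" using colg[OF x] a by (simp add: col_def the_layer)
    from gx show ?thesis unfolding VGI'
    proof (elim disjE exE conjE)
      fix v assume "\<gamma> (Inr y) = Inl v" then show ?thesis using c by (simp add: col_def)
    next
      fix z b assume e: "\<gamma> (Inr y) = Inr z" "b \<in> p" "z \<in> L b"
      then have "Inl b = Inl a" using c by (simp add: col_def the_layer)
      then show ?thesis using e by auto
    qed
  qed
  have step1': "\<exists>y\<in>L a. \<gamma> (Inr y) = Inr z" if a: "a \<in> p" "z \<in> L a" for a z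
  proof -
    have "Inr z \<in> VG'" using a VGI' by blast
    then obtain x where x: "x \<in> VG" "\<gamma> x = Inr z" using img by force
    have c: "col x = Inl a" using colg[OF x(1)] x(2) a by (simp add: col_def the_layer)
    from x(1) show ?thesis unfolding VGI
    proof (elim disjE exE conjE)
      fix v assume "x = Inl v" then show ?thesis using c by (simp add: col_def)
    next
      fix y b assume e: "x = Inr y" "b \<in> p" "y \<in> L b"
      then have "Inl b = Inl a" using c by (simp add: col_def the_layer)
      then show ?thesis using e x by auto
    qed
  qed
  define \<zeta> where "\<zeta> = (\<lambda>a x. if a \<in> p \<and> x \<in> L a then (case \<gamma> (Inr x) of Inr z \<Rightarrow> z | Inl _ \<Rightarrow> x) else x)"
  have zeta: "\<gamma> (Inr y) = Inr (\<zeta> a y) \<and> \<zeta> a y \<in> L a" if a: "a \<in> p" "y \<in> L a" for a y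
    using step1[OF a] a unfolding \<zeta>_def by auto
  have zeta_out: "a \<notin> p \<Longrightarrow> \<zeta> a = id" for a by (auto simp: \<zeta>_def)
  have zP: "\<zeta> \<in> Pp d L p"
    unfolding Pp_def
  proof (intro CollectI allI conjI impI)
    fix a assume "a \<le> d \<and> a \<in> p"
    then have a: "a \<in> p" by simp
    show "\<zeta> a permutes L a"
    proof (rule bij_imp_permutes)
      show "bij_betw (\<zeta> a) (L a) (L a)"
        unfolding bij_betw_def
      proof
        show "inj_on (\<zeta> a) (L a)"
        proof (rule inj_onI)
          fix x y assume x: "x \<in> L a" and y: "y \<in> L a" and e: "\<zeta> a x = \<zeta> a y"
          have "\<gamma> (Inr x) = \<gamma> (Inr y)" using zeta[OF a x] zeta[OF a y] e by simp
          moreover have "Inr x \<in> VG" "Inr y \<in> VG" using a x y VGI by blast+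
          ultimately show "x = y" using inj by (auto dest: inj_onD)
        qed
        show "\<zeta> a ` L a = L a"
        proof
          show "\<zeta> a ` L a \<subseteq> L a" using zeta[OF a] by auto
          show "L a \<subseteq> \<zeta> a ` L a"
          proof
            fix z assume "z \<in> L a"
            then obtain y where "y \<in> L a" "\<gamma> (Inr y) = Inr z" using step1'[OF a] by blast
            then show "z \<in> \<zeta> a ` L a" using zeta[OF a] by force
          qed
        qed
      qed
      show "\<And>x. x \<notin> L a \<Longrightarrow> \<zeta> a x = x" by (simp add: \<zeta>_def)
    qed
  next
    fix a assume "\<not> (a \<le> d \<and> a \<in> p)"
    then have "a \<notin> p" using p_sub by auto
    then show "\<zeta> a = id" by (rule zeta_out)
  qed
  have agree: "\<gamma> x = g_p d L p \<zeta> x" if x: "x \<in> VG" for x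
    using x unfolding VGI
  proof (elim disjE exE conjE)
    fix y a assume e: "x = Inr y" "a \<in> p" "y \<in> L a"
    then show ?thesis using zeta[of a y] g_p_Inr by simp
  next
    fix v assume e: "x = Inl v" "v \<in> fst M"
    have v: "length v = Suc d" "\<And>i. i \<le> d \<Longrightarrow> v ! i \<in> L i" using e V by (auto simp: tuples_def)
    have gx: "\<gamma> (Inl v) \<in> VG'" using x e img by auto
    have c: "col (\<gamma> (Inl v)) = Inr (map (\<lambda>i. v ! i) (pbar d p))" using colg[OF x] e by (simp add: col_def)
    obtain w where w: "\<gamma> (Inl v) = Inl w" "w \<in> fst M'"
      using gx unfolding VGI'
    proof (elim disjE exE conjE)
      fix z b assume "\<gamma> (Inl v) = Inr z" "b \<in> p" "z \<in> L b" then show ?thesis using c by (simp add: col_def)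
    qed auto
    have wl: "length w = Suc d" "\<And>i. i \<le> d \<Longrightarrow> w ! i \<in> L i" using w V' by (auto simp: tuples_def)
    have mp: "map (\<lambda>i. w ! i) (pbar d p) = map (\<lambda>i. v ! i) (pbar d p)" using c w by (simp add: col_def)
    have "w = tup_act \<zeta> v"
    proof (rule nth_equalityI)
      show "length w = length (tup_act \<zeta> v)" using wl v by simp
      fix i assume "i < length w"
      then have i: "i \<le> d" using wl by simp
      show "w ! i = tup_act \<zeta> v ! i"
      proof (cases "i \<in> p")
        case True
        have "(Inr (v ! i), Inl v) \<in> fst (snd G)" unfolding G_def edges_f_p using e True by blast
        then have "(\<gamma> (Inr (v ! i)), \<gamma> (Inl v)) \<in> fst (snd G')" unfolding edges[symmetric] by force
        then have "(Inr (\<zeta> i (v ! i)), Inl w) \<in> fst (snd G')" using zeta[OF True v(2)[OF i]] w by simp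
        then obtain b where b: "\<zeta> i (v ! i) = w ! b" "b \<in> p" unfolding G'_def edges_f_p by auto
        have "w ! b \<in> L b" using wl b p_sub by auto
        moreover have "w ! b \<in> L i" using b zeta[OF True v(2)[OF i]] by simp
        ultimately have "b = i" using layer_unique b True by metis
        then show ?thesis using b v i by simp
      next
        case False
        then have "i \<in> set (pbar d p)" using i by (simp add: set_pbar)
        then have "w ! i = v ! i" using mp by (simp add: map_eq_conv)
        then show ?thesis using False zeta_out v i by simp
      qed
    qed
    then show ?thesis using e w g_p_Inl by simp
  qed
  have wf: "fst (snd G) \<subseteq> fst G \<times> fst G" using wf_f_p[OF M] unfolding G_def cg_wf_parts by blast
  have "G' = cg_act (g_p d L p \<zeta>) G" using act cg_act_cong[OF wf, of \<gamma> "g_p d L p \<zeta>"] agree VG_def by simp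
  also have "\<dots> = f_p d L p (ml_act \<zeta> M)" unfolding G_def by (rule fwd(2)[OF M zP])
  finally have "ml_act \<zeta> M = M'" unfolding G'_def by (metis f_p_inj)
  then show ?thesis using zP unfolding ml_iso_p_def by blast
qed

end

theorem corollary1:
  fixes d :: nat and L :: "nat \<Rightarrow> 'a set" and p :: "nat set"
  assumes disj: "\<And>a b. a \<le> d \<Longrightarrow> b \<le> d \<Longrightarrow> a \<noteq> b \<Longrightarrow> L a \<inter> L b = {}"
    and p_sub: "p \<subseteq> {..d}" and p_ne: "p \<noteq> {}"
  shows
    "(\<forall>M M'. mlnet d L M \<longrightarrow> mlnet d L M' \<longrightarrow>
        (ml_iso_p d L p M M' \<longleftrightarrow> cg_iso (f_p d L p M) (f_p d L p M')))
   \<and> (\<forall>CG :: ('a list + 'a, nat + 'a list) cgraph \<Rightarrow> 'b.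
        (\<forall>G G'. cg_wf G \<longrightarrow> cg_wf G' \<longrightarrow> (CG G = CG G' \<longleftrightarrow> cg_iso G G')) \<longrightarrow>
        (\<forall>M M'. mlnet d L M \<longrightarrow> mlnet d L M' \<longrightarrow>
           (CG (f_p d L p M) = CG (f_p d L p M') \<longleftrightarrow> ml_iso_p d L p M M')))
   \<and> (\<forall>M. mlnet d L M \<longrightarrow>
        Aut_p d L p M = {\<zeta> \<in> Pp d L p. g_p d L p \<zeta> \<in> cg_Aut (f_p d L p M)})"
  proof -
  have A: "\<forall>M M'. mlnet d L M \<longrightarrow> mlnet d L M' \<longrightarrow>
        (ml_iso_p d L p M M' \<longleftrightarrow> cg_iso (f_p d L p M) (f_p d L p M'))"
  proof (intro allI impI iffI)
    fix M M' assume M: "mlnet d L M" and M': "mlnet d L M'"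
    { assume "ml_iso_p d L p M M'"
      then obtain z where z: "z \<in> Pp d L p" "ml_act z M = M'" unfolding ml_iso_p_def by blast
      show "cg_iso (f_p d L p M) (f_p d L p M')"
        unfolding cg_iso_def using fwd[of d L p, OF disj p_sub M z(1)] z(2) by blast }
    { assume "cg_iso (f_p d L p M) (f_p d L p M')"
      then show "ml_iso_p d L p M M'" using bwd[of d L p, OF disj p_sub M M'] by blast }
  qed
  have B: "\<forall>CG :: ('a list + 'a, nat + 'a list) cgraph \<Rightarrow> 'b.
        (\<forall>G G'. cg_wf G \<longrightarrow> cg_wf G' \<longrightarrow> (CG G = CG G' \<longleftrightarrow> cg_iso G G')) \<longrightarrow>
        (\<forall>M M'. mlnet d L M \<longrightarrow> mlnet d L M' \<longrightarrow>
           (CG (f_p d L p M) = CG (f_p d L p M') \<longleftrightarrow> ml_iso_p d L p M M'))"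
    using A wf_f_p[of d L p, OF disj p_sub] by blast
  have C: "\<forall>M. mlnet d L M \<longrightarrow>
        Aut_p d L p M = {\<zeta> \<in> Pp d L p. g_p d L p \<zeta> \<in> cg_Aut (f_p d L p M)}"
  proof (intro allI impI set_eqI iffI)
    fix M z assume M: "mlnet d L M"
    { assume "z \<in> Aut_p d L p M"
      then have z: "z \<in> Pp d L p" "ml_act z M = M" unfolding Aut_p_def by auto
      show "z \<in> {\<zeta> \<in> Pp d L p. g_p d L p \<zeta> \<in> cg_Aut (f_p d L p M)}"
        using fwd[of d L p, OF disj p_sub M z(1)] z unfolding cg_Aut_def by simp }
    { assume "z \<in> {\<zeta> \<in> Pp d L p. g_p d L p \<zeta> \<in> cg_Aut (f_p d L p M)}"
      then have z: "z \<in> Pp d L p" "cg_act (g_p d L p z) (f_p d L p M) = f_p d L p M"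
        unfolding cg_Aut_def by auto
      then have "f_p d L p (ml_act z M) = f_p d L p M" using fwd(2)[of d L p, OF disj p_sub M z(1)] by simp
      then have "ml_act z M = M" by (rule f_p_inj)
      then show "z \<in> Aut_p d L p M" using z unfolding Aut_p_def by simp }
  qed
  show ?thesis using A B C by blast
qed

end
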